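(* Let $\lambda>0$, $b\ge 0$, and let $(s_n)_{n\ge 1}$, $(a_n)_{n\ge 1}$ be real sequences with $s_n\in[0,1)$ for all $n$, $s\doteq\sup_{n}s_n<1$ and $A\doteq\sup_{n}a_n<\infty$. Consider the difference equation $$x_{n+1}=s_nx_n+x_{n-1}^{\lambda}e^{a_n-bx_n-x_{n-1}},\qquad n\ge 1,$$ with non-negative initial values $x_0,x_1$. (a) Every non-negative solution is eventually uniformly bounded: there is a constant $M$ depending only on $\lambda,A,s$ (e.g. $M=1+\lambda^{\lambda}e^{A-\lambda}/(1-s)$) such that for every non-negative solution $\{x_n\}$ one has $x_n\le M$ for all sufficiently large $n$. (b) Let $\lambda>1$ and $\rho=\exp\!\left(-\dfrac{A-\ln(1-s)}{\lambda-1}\right)$. If $\{x_n\}$ is a solution with $0\le x_0,x_1<\rho$, then $\lim_{n\to\infty}x_n=0$. (c) Let $\lambda>1$. If $A<\ln(1-s)+(\lambda-1)[1-\ln(\lambda-1)]$, then every non-negative solution converges to $0$.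
   Context: Solutions are real sequences $\{x_n\}_{n\ge0}$ generated by the recursion from the initial values $x_0,x_1$. *)

theory Defs
  imports Complex_Main
begin

text \<open>A (real) solution of
  x_{n+1} = s_n x_n + x_{n-1}^lam * exp(a_n - b x_n - x_{n-1}),  n \<ge> 1,
  generated from the initial values x 0, x 1.  The power is taken as powr,
  which for nonnegative bases and lam > 0 is the usual real power (0 powr lam = 0).\<close>
definition is_solution ::
  "real \<Rightarrow> real \<Rightarrow> (nat \<Rightarrow> real) \<Rightarrow> (nat \<Rightarrow> real) \<Rightarrow> (nat \<Rightarrow> real) \<Rightarrow> bool" where
  "is_solution lam b s a x \<longleftrightarrow>
     (\<forall>n\<ge>1. x (Suc n) = s n * x n + (x (n - 1)) powr lam * exp (a n - b * x n - x (n - 1)))"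

end

theory Submission
  imports Defs
begin

lemma rec_eq:
  assumes "is_solution lam b s a x"
  shows "x (Suc (Suc n)) = s (Suc n) * x (Suc n) + x n powr lam * exp (a (Suc n) - b * x (Suc n) - x n)"
  using assms unfolding is_solution_def by (metis diff_Suc_1 le_add1 plus_1_eq_Suc)

lemma sol_nonneg:
  assumes "is_solution lam b s a x" "\<forall>n\<ge>1. 0 \<le> s n" "x 0 \<ge> 0" "x 1 \<ge> 0"
  shows "x n \<ge> 0"
proof -
  have "x n \<ge> 0 \<and> x (Suc n) \<ge> 0"
  proof (induction n)
    case 0 then show ?case using assms by simp
  next
    case (Suc n)
    have "s (Suc n) \<ge> 0" using assms(2) by simp
    then have "s (Suc n) * x (Suc n) \<ge> 0" using Suc by simp
    then show ?case using Suc rec_eq[OF assms(1), of n] by simp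
  qed
  then show ?thesis by simp
qed

lemma powr_exp_bound:
  fixes mu z :: real
  assumes "0 < mu" "0 \<le> z"
  shows "z powr mu * exp (- z) \<le> mu powr mu * exp (- mu)"
proof (cases "z = 0")
  case True then show ?thesis by simp
next
  case False
  then have zp: "z > 0" using assms by simp
  have "ln (z / mu) \<le> z / mu - 1" using zp assms by (intro ln_le_minus_one) simp
  then have "mu * ln (z / mu) \<le> mu * (z / mu - 1)" using assms by (simp add: mult_left_mono)
  moreover have "mu * (z / mu - 1) = z - mu" using assms by (simp add: field_simps)
  moreover have "ln (z / mu) = ln z - ln mu" using assms zp by (simp add: ln_div)
  ultimately have "mu * (ln z - ln mu) \<le> z - mu" by simp
  then have "mu * ln z - z \<le> mu * ln mu - mu" by (simp add: algebra_simps)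
  then have "exp (mu * ln z - z) \<le> exp (mu * ln mu - mu)" by simp
  then show ?thesis using zp assms by (simp add: powr_def exp_diff exp_minus field_simps)
qed

lemma geo_lemma:
  fixes u :: "nat \<Rightarrow> real"
  assumes nn: "\<And>n. u n \<ge> 0" and r0: "0 \<le> r" and r1: "r < 1"
    and rec: "\<And>n. u (Suc (Suc n)) \<le> r * max (u (Suc n)) (u n)"
  shows "u \<longlonglongrightarrow> 0"
proof -
  define t where "t = max (sqrt r) (1/2)"
  have "sqrt r < 1" using r0 r1 by (metis real_sqrt_less_iff real_sqrt_one)
  then have t0: "t > 0" and t1: "t < 1" by (auto simp: t_def)
  have "r = sqrt r ^ 2" using r0 by simp
  also have "\<dots> \<le> t ^ 2" using r0 by (intro power_mono) (auto simp: t_def)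
  finally have rt: "r \<le> t ^ 2" .
  define y where "y n = max (u (Suc n)) (u n)" for n
  have ynn: "y n \<ge> 0" for n using nn by (simp add: y_def le_max_iff_disj)
  have ry: "r * y n \<le> y n" for n using mult_right_mono[of r 1 "y n"] ynn[of n] r1 by simp
  have u2: "u (Suc (Suc n)) \<le> r * y n" for n using rec[of n] by (simp add: y_def)
  have ymono: "y (Suc n) \<le> y n" for n using u2[of n] ry[of n] by (simp add: y_def)
  have y2: "y (Suc (Suc n)) \<le> r * y n" for n
  proof -
    have "u (Suc (Suc (Suc n))) \<le> r * y (Suc n)" by (rule u2)
    also have "\<dots> \<le> r * y n" using ymono[of n] r0 by (simp add: mult_left_mono)
    finally show ?thesis using u2[of n] by (simp add: y_def)
  qed
  define K where "K = y 0 / t"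
  have K0: "K \<ge> 0" using ynn t0 by (simp add: K_def)
  have "y n \<le> K * t ^ n \<and> y (Suc n) \<le> K * t ^ Suc n" for n
  proof (induction n)
    case 0
    have "y 0 \<le> y 0 / t" using ynn[of 0] t0 t1 mult_left_mono[of t 1 "y 0"] by (simp add: le_divide_eq)
    moreover have "K * t = y 0" using t0 by (simp add: K_def)
    ultimately show ?case using ymono[of 0] by (simp add: K_def)
  next
    case (Suc n)
    have "y (Suc (Suc n)) \<le> r * y n" by (rule y2)
    also have "\<dots> \<le> t^2 * (K * t ^ n)" using Suc rt r0 ynn[of n]
      by (intro mult_mono) auto
    also have "\<dots> = K * t ^ Suc (Suc n)" by (simp add: power2_eq_square algebra_simps)
    finally show ?case using Suc by simp
  qed
  then have ub: "u n \<le> K * t ^ n" for n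
    using order_trans[of "u n" "y n" "K * t ^ n"] by (auto simp: y_def)
  have lim: "(\<lambda>n. K * t ^ n) \<longlonglongrightarrow> 0"
    using t0 t1 by (intro tendsto_mult_right_zero LIMSEQ_power_zero) simp
  show ?thesis
    by (rule tendsto_sandwich[OF _ _ tendsto_const lim]) (use ub nn in simp_all)
qed

lemma partA:
  fixes lam b S A :: real and s a :: "nat \<Rightarrow> real"
  assumes lam_pos: "lam > 0" and b0: "b \<ge> 0"
    and sr: "\<forall>n\<ge>1. 0 \<le> s n" and sS: "\<And>n. n \<ge> 1 \<Longrightarrow> s n \<le> S"
    and S0: "0 \<le> S" and S1: "S < 1" and aA: "\<And>n. n \<ge> 1 \<Longrightarrow> a n \<le> A"
    and sol: "is_solution lam b s a x" and x0: "x 0 \<ge> 0" and x1: "x 1 \<ge> 0"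
  shows "\<forall>\<^sub>F n in sequentially. x n \<le> 1 + lam powr lam * exp (A - lam) / (1 - S)"
proof -
  define C where "C = lam powr lam * exp (A - lam)"
  define K where "K = C / (1 - S)"
  have KC: "S * K + C = K" using S1 by (simp add: K_def field_simps)
  have xnn: "x n \<ge> 0" for n by (rule sol_nonneg[OF sol sr x0 x1])
  have step: "x (Suc (Suc n)) \<le> S * x (Suc n) + C" for n
  proof -
    have "exp (a (Suc n) - b * x (Suc n) - x n) \<le> exp (A - x n)"
      using aA[of "Suc n"] mult_nonneg_nonneg[OF b0 xnn[of "Suc n"]] by simp
    then have "x n powr lam * exp (a (Suc n) - b * x (Suc n) - x n) \<le> x n powr lam * exp (A - x n)"
      by (simp add: mult_left_mono)
    also have "\<dots> = exp A * (x n powr lam * exp (- x n))" by (simp add: exp_diff exp_minus field_simps)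
    also have "\<dots> \<le> exp A * (lam powr lam * exp (- lam))"
      using powr_exp_bound[OF lam_pos xnn[of n]] by (simp add: mult_left_mono)
    also have "\<dots> = C" by (simp add: C_def exp_diff exp_minus field_simps)
    finally have t2: "x n powr lam * exp (a (Suc n) - b * x (Suc n) - x n) \<le> C" .
    have "s (Suc n) * x (Suc n) \<le> S * x (Suc n)" using sS[of "Suc n"] xnn[of "Suc n"]
      by (simp add: mult_right_mono)
    then show ?thesis using t2 rec_eq[OF sol, of n] by simp
  qed
  define D where "D = max 0 (x 1 - K)"
  have D0: "D \<ge> 0" by (simp add: D_def)
  have bnd: "x (Suc m) \<le> K + S ^ m * D" for m
  proof (induction m)
    case 0 then show ?case by (simp add: D_def)
  next
    case (Suc m)
    have "x (Suc (Suc m)) \<le> S * x (Suc m) + C" by (rule step)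
    also have "\<dots> \<le> S * (K + S ^ m * D) + C" using Suc S0 by (simp add: mult_left_mono)
    also have "\<dots> = K + S ^ Suc m * D" using KC by (simp add: algebra_simps)
    finally show ?case .
  qed
  have "(\<lambda>m. S ^ m * D) \<longlonglongrightarrow> 0"
    using S0 S1 by (intro tendsto_mult_left_zero LIMSEQ_power_zero) simp
  then have "\<forall>\<^sub>F m in sequentially. S ^ m * D < 1"
    by (rule order_tendstoD) simp
  then obtain N where N: "\<And>m. m \<ge> N \<Longrightarrow> S ^ m * D < 1" by (auto simp: eventually_sequentially)
  show ?thesis unfolding eventually_sequentially
  proof (intro exI allI impI)
    fix n assume "Suc N \<le> n"
    then obtain m where m: "n = Suc m" "m \<ge> N" by (cases n) auto
    show "x n \<le> 1 + lam powr lam * exp (A - lam) / (1 - S)"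
      using bnd[of m] N[OF m(2)] m(1) by (simp add: K_def C_def)
  qed
qed

lemma partB:
  fixes lam b S A :: real and s a :: "nat \<Rightarrow> real"
  assumes lam1: "lam > 1" and b0: "b \<ge> 0"
    and sr: "\<forall>n\<ge>1. 0 \<le> s n" and sS: "\<And>n. n \<ge> 1 \<Longrightarrow> s n \<le> S"
    and S0: "0 \<le> S" and S1: "S < 1" and aA: "\<And>n. n \<ge> 1 \<Longrightarrow> a n \<le> A"
    and sol: "is_solution lam b s a x" and x0: "x 0 \<ge> 0" and x1: "x 1 \<ge> 0"
    and x0r: "x 0 < exp (- ((A - ln (1 - S)) / (lam - 1)))"
    and x1r: "x 1 < exp (- ((A - ln (1 - S)) / (lam - 1)))"
  shows "x \<longlonglongrightarrow> 0"
proof -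
  define rho where "rho = exp (- ((A - ln (1 - S)) / (lam - 1)))"
  define q where "q = max (x 0) (x 1)"
  have q0: "q \<ge> 0" and qr: "q < rho" using x0 x1 x0r x1r by (auto simp: q_def rho_def)
  define c where "c = exp A * q powr (lam - 1)"
  have c0: "c \<ge> 0" by (simp add: c_def)
  have rhop: "rho powr (lam - 1) = (1 - S) / exp A"
  proof -
    have "rho powr (lam - 1) = exp ((lam - 1) * ln rho)" by (simp add: powr_def rho_def)
    also have "\<dots> = exp (ln (1 - S) - A)" using lam1 by (simp add: rho_def)
    also have "\<dots> = (1 - S) / exp A" using S1 by (simp add: exp_diff)
    finally show ?thesis .
  qed
  have c1: "c < 1 - S"
  proof (cases "q = 0")
    case True then show ?thesis using S1 by (simp add: c_def)
  next
    case False
    then have "q powr (lam - 1) < rho powr (lam - 1)"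
      using q0 qr lam1 by (intro powr_less_mono2) auto
    then have "c < exp A * ((1 - S) / exp A)" unfolding c_def rhop
      by (intro mult_strict_left_mono) auto
    then show ?thesis by simp
  qed
  have xnn: "x n \<ge> 0" for n by (rule sol_nonneg[OF sol sr x0 x1])
  have pw: "z powr lam \<le> z * q powr (lam - 1)" if "0 \<le> z" "z \<le> q" for z
  proof (cases "z = 0")
    case True then show ?thesis by simp
  next
    case False
    then have zp: "z > 0" using that by simp
    have "z powr lam = z powr (1 + (lam - 1))" by simp
    also have "\<dots> = z * z powr (lam - 1)" using zp powr_add[of z 1 "lam - 1"] by simp
    also have "\<dots> \<le> z * q powr (lam - 1)" using zp that lam1
      by (intro mult_left_mono powr_mono2) auto
    finally show ?thesis .
  qed
  have step: "x (Suc (Suc n)) \<le> S * x (Suc n) + c * x n" if xq: "x n \<le> q" for n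
  proof -
    have "exp (a (Suc n) - b * x (Suc n) - x n) \<le> exp A"
      using aA[of "Suc n"] mult_nonneg_nonneg[OF b0 xnn[of "Suc n"]] xnn[of n] by simp
    then have "x n powr lam * exp (a (Suc n) - b * x (Suc n) - x n) \<le> x n powr lam * exp A"
      by (simp add: mult_left_mono)
    also have "\<dots> \<le> x n * q powr (lam - 1) * exp A"
      using pw[OF xnn[of n] xq] by (simp add: mult_right_mono)
    also have "\<dots> = c * x n" by (simp add: c_def)
    finally have t2: "x n powr lam * exp (a (Suc n) - b * x (Suc n) - x n) \<le> c * x n" .
    have "s (Suc n) * x (Suc n) \<le> S * x (Suc n)" using sS[of "Suc n"] xnn[of "Suc n"]
      by (simp add: mult_right_mono)
    then show ?thesis using t2 rec_eq[OF sol, of n] by simp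
  qed
  have inv: "x n \<le> q \<and> x (Suc n) \<le> q" for n
  proof (induction n)
    case 0 then show ?case by (simp add: q_def)
  next
    case (Suc n)
    have "x (Suc (Suc n)) \<le> S * x (Suc n) + c * x n" using Suc by (intro step) simp
    also have "\<dots> \<le> S * q + c * q" using Suc S0 c0 by (intro add_mono mult_left_mono) auto
    also have "\<dots> \<le> q" using c1 q0 mult_right_mono[of "S + c" 1 q] by (simp add: algebra_simps)
    finally show ?case using Suc by simp
  qed
  show ?thesis
  proof (rule geo_lemma[of x "S + c"])
    show "0 \<le> x n" for n by (rule xnn)
    show "0 \<le> S + c" using S0 c0 by simp
    show "S + c < 1" using c1 by simp
    show "x (Suc (Suc n)) \<le> (S + c) * max (x (Suc n)) (x n)" for n
    proof -
      have "x (Suc (Suc n)) \<le> S * x (Suc n) + c * x n" using inv[of n] by (intro step) simp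
      also have "\<dots> \<le> S * max (x (Suc n)) (x n) + c * max (x (Suc n)) (x n)"
        using S0 c0 by (intro add_mono mult_left_mono) auto
      finally show ?thesis by (simp add: algebra_simps)
    qed
  qed
qed

lemma partC:
  fixes lam b S A :: real and s a :: "nat \<Rightarrow> real"
  assumes lam1: "lam > 1" and b0: "b \<ge> 0"
    and sr: "\<forall>n\<ge>1. 0 \<le> s n" and sS: "\<And>n. n \<ge> 1 \<Longrightarrow> s n \<le> S"
    and S0: "0 \<le> S" and S1: "S < 1" and aA: "\<And>n. n \<ge> 1 \<Longrightarrow> a n \<le> A"
    and Acond: "A < ln (1 - S) + (lam - 1) * (1 - ln (lam - 1))"
    and sol: "is_solution lam b s a x" and x0: "x 0 \<ge> 0" and x1: "x 1 \<ge> 0"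
  shows "x \<longlonglongrightarrow> 0"
proof -
  define c where "c = exp A * ((lam - 1) powr (lam - 1) * exp (- (lam - 1)))"
  have c0: "c \<ge> 0" by (simp add: c_def)
  have "c = exp (A + (lam - 1) * ln (lam - 1) - (lam - 1))"
    using lam1 by (simp add: c_def powr_def exp_add exp_diff exp_minus field_simps)
  also have "\<dots> < exp (ln (1 - S))" using Acond by (simp add: algebra_simps)
  also have "\<dots> = 1 - S" using S1 by simp
  finally have c1: "c < 1 - S" .
  have xnn: "x n \<ge> 0" for n by (rule sol_nonneg[OF sol sr x0 x1])
  have pw: "z powr lam * exp (- z) \<le> z * ((lam - 1) powr (lam - 1) * exp (- (lam - 1)))"
    if "0 \<le> z" for z
  proof (cases "z = 0")
    case True then show ?thesis by simp
  next
    case False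
    then have zp: "z > 0" using that by simp
    have "z powr lam = z powr (1 + (lam - 1))" by simp
    also have "\<dots> = z * z powr (lam - 1)" using zp powr_add[of z 1 "lam - 1"] by simp
    finally have "z powr lam * exp (- z) = z * (z powr (lam - 1) * exp (- z))" by (simp add: mult.assoc)
    also have "\<dots> \<le> z * ((lam - 1) powr (lam - 1) * exp (- (lam - 1)))"
      using zp lam1 powr_exp_bound[of "lam - 1" z] by (intro mult_left_mono) auto
    finally show ?thesis .
  qed
  show ?thesis
  proof (rule geo_lemma[of x "S + c"])
    show "0 \<le> x n" for n by (rule xnn)
    show "0 \<le> S + c" using S0 c0 by simp
    show "S + c < 1" using c1 by simp
    show "x (Suc (Suc n)) \<le> (S + c) * max (x (Suc n)) (x n)" for n
    proof -
      have "exp (a (Suc n) - b * x (Suc n) - x n) \<le> exp (A - x n)"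
        using aA[of "Suc n"] mult_nonneg_nonneg[OF b0 xnn[of "Suc n"]] by simp
      then have "x n powr lam * exp (a (Suc n) - b * x (Suc n) - x n) \<le> x n powr lam * exp (A - x n)"
        by (simp add: mult_left_mono)
      also have "\<dots> = exp A * (x n powr lam * exp (- x n))" by (simp add: exp_diff exp_minus field_simps)
      also have "\<dots> \<le> exp A * (x n * ((lam - 1) powr (lam - 1) * exp (- (lam - 1))))"
        using pw[OF xnn[of n]] by (simp add: mult_left_mono)
      also have "\<dots> = c * x n" by (simp add: c_def)
      finally have t2: "x n powr lam * exp (a (Suc n) - b * x (Suc n) - x n) \<le> c * x n" .
      have "s (Suc n) * x (Suc n) \<le> S * x (Suc n)" using sS[of "Suc n"] xnn[of "Suc n"]
        by (simp add: mult_right_mono)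
      then have "x (Suc (Suc n)) \<le> S * x (Suc n) + c * x n" using t2 rec_eq[OF sol, of n] by simp
      also have "\<dots> \<le> S * max (x (Suc n)) (x n) + c * max (x (Suc n)) (x n)"
        using S0 c0 by (intro add_mono mult_left_mono) auto
      finally show ?thesis by (simp add: algebra_simps)
    qed
  qed
qed

theorem mainTheorem1:
  fixes lam b :: real and s a :: "nat \<Rightarrow> real"
  assumes lam_pos: "lam > 0"
    and b_nonneg: "b \<ge> 0"
    and s_range: "\<forall>n\<ge>1. 0 \<le> s n \<and> s n < 1"
    and s_bdd: "bdd_above (s ` {1..})"
    and s_sup: "(SUP n\<in>{1..}. s n) < 1"
    and a_bdd: "bdd_above (a ` {1..})"
  shows
    "(\<forall>x. is_solution lam b s a x \<and> x 0 \<ge> 0 \<and> x 1 \<ge> 0 \<longrightarrow>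
        (\<forall>\<^sub>F n in sequentially.
           x n \<le> 1 + lam powr lam * exp ((SUP n\<in>{1..}. a n) - lam) / (1 - (SUP n\<in>{1..}. s n))))
     \<and> (lam > 1 \<longrightarrow>
        (\<forall>x. is_solution lam b s a x \<and> 0 \<le> x 0 \<and> 0 \<le> x 1
             \<and> x 0 < exp (- (((SUP n\<in>{1..}. a n) - ln (1 - (SUP n\<in>{1..}. s n))) / (lam - 1)))
             \<and> x 1 < exp (- (((SUP n\<in>{1..}. a n) - ln (1 - (SUP n\<in>{1..}. s n))) / (lam - 1)))
             \<longrightarrow> x \<longlonglongrightarrow> 0))
     \<and> (lam > 1 \<longrightarrow>
        (SUP n\<in>{1..}. a n) < ln (1 - (SUP n\<in>{1..}. s n)) + (lam - 1) * (1 - ln (lam - 1)) \<longrightarrow>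
        (\<forall>x. is_solution lam b s a x \<and> x 0 \<ge> 0 \<and> x 1 \<ge> 0 \<longrightarrow> x \<longlonglongrightarrow> 0))"
proof -
  define S where "S = (SUP n\<in>{1..}. s n)"
  define A where "A = (SUP n\<in>{1..}. a n)"
  have sr: "\<forall>n\<ge>1. 0 \<le> s n" using s_range by simp
  have sS: "s n \<le> S" if "n \<ge> 1" for n
    unfolding S_def using that s_bdd by (intro cSUP_upper) auto
  have aA: "a n \<le> A" if "n \<ge> 1" for n
    unfolding A_def using that a_bdd by (intro cSUP_upper) auto
  have S0: "0 \<le> S" using sS[of 1] s_range by force
  have S1: "S < 1" using s_sup by (simp add: S_def)
  show ?thesis
    unfolding S_def[symmetric] A_def[symmetric]
    using partA[where lam=lam and b=b and S=S and A=A and s=s and a=a, OF lam_pos b_nonneg sr sS S0 S1 aA]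
      partB[where lam=lam and b=b and S=S and A=A and s=s and a=a, OF _ b_nonneg sr sS S0 S1 aA]
      partC[where lam=lam and b=b and S=S and A=A and s=s and a=a, OF _ b_nonneg sr sS S0 S1 aA]
    by blast
qed

end
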